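(* For $0<t<\rho_W$ we have $b^0_t=\dfrac{1}{W(t)}$, and for $t\ge\rho_W$ we have $b^0_t=0$.
   Context: $W(x)=\sum_{w\in W}x^{d(w)}$ is the growth series of the Coxeter group $W$, and $\rho_W$ is its radius of convergence ($\rho_W=\infty$ if $W$ is finite). $(W,S)$ is a Coxeter system with word length $d$; for $T\subseteq S$, $W_T$ is the subgroup generated by $T$, and $W_T(x)=\sum_{u\in W_T}x^{d(u)}$. Hecke algebra. For $t>0$, ${\bf C}_t[W]$ has basis $\{\delta_w\}$, inner product $\langle\sum a_w\delta_w,\sum b_w\delta_w\rangle_t=\sum a_w\overline{b_w}t^{d(w)}$, and Hecke $t$-multiplication with $\delta_w\delta_s=\delta_{ws}$ if $d(ws)>d(w)$ and $\delta_w\delta_s=t\delta_{ws}+(t-1)\delta_w$ otherwise. $L^2_t$ is its completion, and $V_t$ is the von Neumann algebra of right Hecke multiplications. The trace of right multiplication by a bounded $b$ is the coefficient of $\delta_1$ in $b$, summed over diagonal entries for matrices. Davis complex. $\Delta$ is a simplex with codimension-one faces labelled by $S$, and $\Delta_T$ is the intersection of the faces labelled by $T$. $\mathcal F=\{T:W_T\text{ finite}\}$. The Davis chamber $D$ is the subcomplex of the barycentric subdivision of $\Delta$ spanned by the barycentres of $\Delta_T$, $T\in\mathcal F$, and $D_T=D\cap\Delta_T$. The Davis complex is $\Sigma=W\times D/\sim$, with $(w,p)\sim(u,p)$ iff $p\in D_T$ and $w^{-1}u\in W_T$ for some $T$. For a simplex $\sigma$, $d(\sigma)=\min\{d(w):\sigma\subseteq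 wD\}$. For $\sigma\subseteq D$, $T(\sigma)$ is the largest $T$ with $\sigma\subseteq D_T$. Weighted cohomology. $L^2_tC^i(\Sigma)$ is the space of $i$-cochains (with $W$-equivariant orientations) square-summable for weight $t^{d(\sigma)}$. The coboundary is $\delta$, with adjoint $\partial^tf(\eta)=\sum_{\sigma\supset\eta}[\eta:\sigma]t^{d(\sigma)-d(\eta)}f(\sigma)$, and $L^2_t\mathcal H^i=\ker\delta\cap\ker\partial^t$. Betti numbers. $b^i_t$ is the trace of the orthogonal projection onto $\Phi(L^2_t\mathcal H^i)$, where $\Phi\colon L^2_tC^i(\Sigma)\to\bigoplus_{\sigma\in D^{(i)}}L^2_t$ has $\sigma$-component $f\mapsto W_{T(\sigma)}(t)^{-1/2}\sum_wf(w\sigma)\delta_w$. *)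

theory Defs
  imports "HOL-Analysis.Analysis" "HOL-Algebra.Multiplicative_Group"
    "HOL-Algebra.Generated_Groups" "HOL-Algebra.Coset"
begin

definition word_eval :: "('a, 'b) monoid_scheme \<Rightarrow> 'a list \<Rightarrow> 'a" where
  "word_eval G ws = foldr (\<lambda>s x. s \<otimes>\<^bsub>G\<^esub> x) ws \<one>\<^bsub>G\<^esub>"

text \<open>The congruence on words over S generated by the Coxeter relators
  (s t)^(m_st), where m_st is the order of s t in G (relators only for finite orders).
  For s = t this gives the relator s s.\<close>
inductive cox_equiv :: "('a, 'b) monoid_scheme \<Rightarrow> 'a set \<Rightarrow> 'a list \<Rightarrow> 'a list \<Rightarrow> bool"
  for G S where
  refl: "cox_equiv G S u u"
| sym: "cox_equiv G S u v \<Longrightarrow> cox_equiv G S v u"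
| trans: "cox_equiv G S u v \<Longrightarrow> cox_equiv G S v w \<Longrightarrow> cox_equiv G S u w"
| rel: "s \<in> S \<Longrightarrow> t \<in> S \<Longrightarrow> group.ord G (s \<otimes>\<^bsub>G\<^esub> t) > 0 \<Longrightarrow>
        cox_equiv G S (u @ concat (replicate (group.ord G (s \<otimes>\<^bsub>G\<^esub> t)) [s, t]) @ v) (u @ v)"

definition coxeter_system :: "('a, 'b) monoid_scheme \<Rightarrow> 'a set \<Rightarrow> bool" where
  "coxeter_system G S \<longleftrightarrow> group G \<and> finite S \<and> S \<noteq> {} \<and> S \<subseteq> carrier G \<and>
     \<one>\<^bsub>G\<^esub> \<notin> S \<and> (\<forall>s\<in>S. s \<otimes>\<^bsub>G\<^esub> s = \<one>\<^bsub>G\<^esub>) \<and>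
     generate G S = carrier G \<and>
     (\<forall>u v. set u \<subseteq> S \<longrightarrow> set v \<subseteq> S \<longrightarrow> word_eval G u = word_eval G v \<longrightarrow> cox_equiv G S u v)"

definition word_len :: "('a, 'b) monoid_scheme \<Rightarrow> 'a set \<Rightarrow> 'a \<Rightarrow> nat" where
  "word_len G S w = (LEAST n. \<exists>ws. set ws \<subseteq> S \<and> length ws = n \<and> word_eval G ws = w)"

definition growth_series :: "('a, 'b) monoid_scheme \<Rightarrow> 'a set \<Rightarrow> real \<Rightarrow> real" where
  "growth_series G S x = infsum (\<lambda>w. x ^ word_len G S w) (carrier G)"

definition growth_radius :: "('a, 'b) monoid_scheme \<Rightarrow> 'a set \<Rightarrow> ereal" where
  "growth_radius G S = conv_radius (\<lambda>n. real (card {w \<in> carrier G. word_len G S w = n}))"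

definition sub_growth :: "('a, 'b) monoid_scheme \<Rightarrow> 'a set \<Rightarrow> 'a set \<Rightarrow> real \<Rightarrow> real" where
  "sub_growth G S T x = infsum (\<lambda>u. x ^ word_len G S u) (generate G T)"

definition spherical :: "('a, 'b) monoid_scheme \<Rightarrow> 'a set \<Rightarrow> 'a set set" where
  "spherical G S = {T. T \<subseteq> S \<and> finite (generate G T)}"

definition wl2 :: "'i set \<Rightarrow> ('i \<Rightarrow> real) \<Rightarrow> ('i \<Rightarrow> complex) set" where
  "wl2 I \<mu> = {g. (\<forall>i. i \<notin> I \<longrightarrow> g i = 0) \<and> (\<lambda>i. (cmod (g i))\<^sup>2 * \<mu> i) summable_on I}"

definition winner :: "'i set \<Rightarrow> ('i \<Rightarrow> real) \<Rightarrow> ('i \<Rightarrow> complex) \<Rightarrow> ('i \<Rightarrow> complex) \<Rightarrow> complex" where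
  "winner I \<mu> g h = infsum (\<lambda>i. g i * cnj (h i) * complex_of_real (\<mu> i)) I"

definition orth_proj :: "'i set \<Rightarrow> ('i \<Rightarrow> real) \<Rightarrow> ('i \<Rightarrow> complex) set \<Rightarrow> ('i \<Rightarrow> complex) \<Rightarrow> ('i \<Rightarrow> complex)" where
  "orth_proj I \<mu> V v = (THE p. p \<in> V \<and> (\<forall>u\<in>V. winner I \<mu> (v - p) u = 0))"

text \<open>Vertices of the Davis complex: a vertex w b_T (b_T the barycentre of Delta_T, T in F)
  is identified with the pair (w W_T, T).\<close>
definition davis_vertices :: "('a, 'b) monoid_scheme \<Rightarrow> 'a set \<Rightarrow> ('a set \<times> 'a set) set" where
  "davis_vertices G S = {(w <#\<^bsub>G\<^esub> generate G T, T) | w T. w \<in> carrier G \<and> T \<in> spherical G S}"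

text \<open>Edges of the Davis complex: w [b_T, b_T'] with T proper subset T', both in F.\<close>
definition davis_edges :: "('a, 'b) monoid_scheme \<Rightarrow> 'a set \<Rightarrow> (('a set \<times> 'a set) \<times> ('a set \<times> 'a set)) set" where
  "davis_edges G S = {((w <#\<^bsub>G\<^esub> generate G T, T), (w <#\<^bsub>G\<^esub> generate G T', T')) | w T T'.
      w \<in> carrier G \<and> T \<in> spherical G S \<and> T' \<in> spherical G S \<and> T \<subset> T'}"

text \<open>d(sigma) = min {d(w). sigma in wD}; for the vertex (C,T) this is the minimal length in C.\<close>
definition vertex_len :: "('a, 'b) monoid_scheme \<Rightarrow> 'a set \<Rightarrow> ('a set \<times> 'a set) \<Rightarrow> nat" where
  "vertex_len G S \<sigma> = (LEAST n. \<exists>w \<in> fst \<sigma>. word_len G S w = n)"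

definition cochain0_weight :: "('a, 'b) monoid_scheme \<Rightarrow> 'a set \<Rightarrow> real \<Rightarrow> ('a set \<times> 'a set) \<Rightarrow> real" where
  "cochain0_weight G S t \<sigma> = t ^ vertex_len G S \<sigma>"

definition coboundary0 :: "('v \<Rightarrow> complex) \<Rightarrow> ('v \<times> 'v) \<Rightarrow> complex" where
  "coboundary0 f e = f (snd e) - f (fst e)"

text \<open>L^2_t H^0 = ker delta intersected with ker partial^t; on 0-cochains partial^t is zero
  (there are no (-1)-simplices), so this is the kernel of delta in L^2_t C^0.\<close>
definition harmonic0 :: "('a, 'b) monoid_scheme \<Rightarrow> 'a set \<Rightarrow> real \<Rightarrow> ('a set \<times> 'a set \<Rightarrow> complex) set" where
  "harmonic0 G S t = {f \<in> wl2 (davis_vertices G S) (cochain0_weight G S t).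
      \<forall>e \<in> davis_edges G S. coboundary0 f e = 0}"

text \<open>Target of Phi: the direct sum over sigma in D^(0) (i.e. T in F) of copies of L^2_t,
  realised as functions on F x W with weight t^d(w).\<close>
definition target_index :: "('a, 'b) monoid_scheme \<Rightarrow> 'a set \<Rightarrow> ('a set \<times> 'a) set" where
  "target_index G S = spherical G S \<times> carrier G"

definition target_weight :: "('a, 'b) monoid_scheme \<Rightarrow> 'a set \<Rightarrow> real \<Rightarrow> ('a set \<times> 'a) \<Rightarrow> real" where
  "target_weight G S t i = t ^ word_len G S (snd i)"

definition Phi0 :: "('a, 'b) monoid_scheme \<Rightarrow> 'a set \<Rightarrow> real \<Rightarrow> ('a set \<times> 'a set \<Rightarrow> complex) \<Rightarrow> ('a set \<times> 'a \<Rightarrow> complex)" where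
  "Phi0 G S t f = (\<lambda>(T, w). if T \<in> spherical G S \<and> w \<in> carrier G
      then complex_of_real (sub_growth G S T t powr (-1/2)) * f (w <#\<^bsub>G\<^esub> generate G T, T)
      else 0)"

definition unit_vec :: "('a, 'b) monoid_scheme \<Rightarrow> 'a set \<Rightarrow> ('a set \<times> 'a \<Rightarrow> complex)" where
  "unit_vec G T = (\<lambda>(T', w). if T' = T \<and> w = \<one>\<^bsub>G\<^esub> then 1 else 0)"

text \<open>b^0_t: trace of the orthogonal projection P onto Phi(L^2_t H^0), i.e. the sum over the
  diagonal entries sigma of the coefficient of delta_1 in the (sigma,sigma) entry, which is
  the inner product of P(delta_1 e_sigma) with delta_1 e_sigma.\<close>
definition betti0 :: "('a, 'b) monoid_scheme \<Rightarrow> 'a set \<Rightarrow> real \<Rightarrow> complex" where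
  "betti0 G S t = (\<Sum>T \<in> spherical G S.
      winner (target_index G S) (target_weight G S t)
        (orth_proj (target_index G S) (target_weight G S t) (Phi0 G S t ` harmonic0 G S t)
           (unit_vec G T))
        (unit_vec G T))"

end

theory Submission
  imports Defs
begin


locale coxctx = group G for G :: "('a, 'b) monoid_scheme" (structure) +
  fixes S :: "'a set"
  assumes finS: "finite S" and Ssub: "S \<subseteq> carrier G"
    and invol: "\<And>s. s \<in> S \<Longrightarrow> s \<otimes> s = \<one>"
    and gen: "generate G S = carrier G"
begin

abbreviation d where "d \<equiv> word_len G S"

lemma we_Nil[simp]: "word_eval G [] = \<one>" by (simp add: word_eval_def)
lemma we_Cons[simp]: "word_eval G (s # ws) = s \<otimes> word_eval G ws" by (simp add: word_eval_def)

lemma we_carrier: "set ws \<subseteq> carrier G \<Longrightarrow> word_eval G ws \<in> carrier G"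
  by (induction ws) auto

lemma we_append: "set xs \<subseteq> carrier G \<Longrightarrow> set ys \<subseteq> carrier G \<Longrightarrow>
   word_eval G (xs @ ys) = word_eval G xs \<otimes> word_eval G ys"
  by (induction xs) (auto simp: we_carrier m_assoc)

lemma inv_S: "s \<in> S \<Longrightarrow> inv s = s"
  using invol Ssub by (meson inv_equality subsetD)

lemma exists_word: assumes "w \<in> carrier G" shows "\<exists>ws. set ws \<subseteq> S \<and> word_eval G ws = w"
proof -
  have "w \<in> generate G S" using assms gen by simp
  then show ?thesis
  proof (induction rule: generate.induct)
    case one then show ?case by (intro exI[of _ "[]"]) simp
  next
    case (incl h) then show ?case using Ssub by (intro exI[of _ "[h]"]) auto
  next
    case (inv h) then show ?case using Ssub inv_S by (intro exI[of _ "[h]"]) auto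
  next
    case (eng h1 h2)
    then obtain xs ys where "set xs \<subseteq> S" "word_eval G xs = h1" "set ys \<subseteq> S" "word_eval G ys = h2" by blast
    then show ?case using Ssub by (intro exI[of _ "xs @ ys"]) (auto simp: we_append)
  qed
qed

lemma d_le: "set ws \<subseteq> S \<Longrightarrow> d (word_eval G ws) \<le> length ws"
  unfolding word_len_def by (rule Least_le) blast

lemma d_ex: assumes "w \<in> carrier G"
  shows "\<exists>ws. set ws \<subseteq> S \<and> length ws = d w \<and> word_eval G ws = w"
proof -
  obtain ws where "set ws \<subseteq> S" "word_eval G ws = w" using exists_word assms by blast
  then have "\<exists>n ws. set ws \<subseteq> S \<and> length ws = n \<and> word_eval G ws = w" by blast
  then show ?thesis unfolding word_len_def by (rule LeastI_ex)
qed

lemma d_one: "d \<one> = 0"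
  using d_le[of "[]"] by simp

definition D where "D n = {w \<in> carrier G. d w = n}"
definition a where "a n = real (card (D n))"

lemma D_sub: "D n \<subseteq> word_eval G ` {ws. set ws \<subseteq> S \<and> length ws = n}"
  using d_ex unfolding D_def by fastforce

lemma D_finite: "finite (D n)"
  by (rule finite_surj[OF finite_lists_length_eq[OF finS] D_sub])

lemma D_submult: "D (m + n) \<subseteq> (\<lambda>(u, v). u \<otimes> v) ` (D m \<times> D n)"
proof
  fix w assume w: "w \<in> D (m + n)"
  have wc: "w \<in> carrier G" "d w = m + n" using w by (auto simp: D_def)
  obtain ws where ws: "set ws \<subseteq> S" "length ws = m + n" "word_eval G ws = w"
    using d_ex[OF wc(1)] wc(2) by auto
  define xs where "xs = take m ws"
  define ys where "ys = drop m ws"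
  have xsS: "set xs \<subseteq> S" using ws(1) unfolding xs_def by (meson order_trans set_take_subset)
  have ysS: "set ys \<subseteq> S" using ws(1) unfolding ys_def by (meson order_trans set_drop_subset)
  have lx: "length xs = m" and ly: "length ys = n" using ws(2) by (auto simp: xs_def ys_def)
  have wxy: "w = word_eval G xs \<otimes> word_eval G ys"
    using ws xsS ysS Ssub we_append[of xs ys] by (auto simp: xs_def ys_def)
  have dx: "d (word_eval G xs) = m"
  proof (rule ccontr)
    assume "d (word_eval G xs) \<noteq> m"
    then have "d (word_eval G xs) < m" using d_le[OF xsS] lx by simp
    obtain xs' where xs': "set xs' \<subseteq> S" "length xs' = d (word_eval G xs)" "word_eval G xs' = word_eval G xs"
      using d_ex we_carrier xsS Ssub by (meson order_trans)
    have "word_eval G (xs' @ ys) = w" using wxy xs' ysS Ssub we_append by auto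
    then have "d w \<le> length (xs' @ ys)" using d_le xs'(1) ysS
      by (metis Un_subset_iff set_append)
    then show False using w xs' ly \<open>d (word_eval G xs) < m\<close> unfolding D_def by simp
  qed
  have dy: "d (word_eval G ys) = n"
  proof (rule ccontr)
    assume "d (word_eval G ys) \<noteq> n"
    then have "d (word_eval G ys) < n" using d_le[OF ysS] ly by simp
    obtain ys' where ys': "set ys' \<subseteq> S" "length ys' = d (word_eval G ys)" "word_eval G ys' = word_eval G ys"
      using d_ex we_carrier ysS Ssub by (meson order_trans)
    have "word_eval G (xs @ ys') = w" using wxy ys' xsS Ssub we_append by auto
    then have "d w \<le> length (xs @ ys')" using d_le ys'(1) xsS
      by (metis Un_subset_iff set_append)
    then show False using w ys' lx \<open>d (word_eval G ys) < n\<close> unfolding D_def by simp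
  qed
  show "w \<in> (\<lambda>(u, v). u \<otimes> v) ` (D m \<times> D n)"
    using wxy dx dy we_carrier xsS ysS Ssub unfolding D_def
    by (intro image_eqI[of _ _ "(word_eval G xs, word_eval G ys)"]) (auto dest: order_trans)
qed

lemma a_submult: "a (m + n) \<le> a m * a n"
proof -
  have "card (D (m + n)) \<le> card ((\<lambda>(u, v). u \<otimes> v) ` (D m \<times> D n))"
    using D_submult by (rule card_mono[rotated]) (simp add: D_finite)
  also have "\<dots> \<le> card (D m \<times> D n)" by (rule card_image_le) (simp add: D_finite)
  finally show ?thesis unfolding a_def by (simp add: card_cartesian_product of_nat_mult[symmetric] del: of_nat_mult)
qed

lemma a_nonneg: "a n \<ge> 0" by (simp add: a_def)


lemma D_disj: "i \<noteq> j \<Longrightarrow> D i \<inter> D j = {}" by (auto simp: D_def)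

lemma sum_union_D: "finite I \<Longrightarrow> sum (\<lambda>w. t ^ d w) (\<Union>n\<in>I. D n) = (\<Sum>n\<in>I. a n * t ^ n)"
proof -
  assume I: "finite I"
  have "sum (\<lambda>w. t ^ d w) (\<Union>n\<in>I. D n) = (\<Sum>n\<in>I. sum (\<lambda>w. t ^ d w) (D n))"
    by (rule sum.UNION_disjoint) (use I D_finite D_disj in auto)
  also have "\<dots> = (\<Sum>n\<in>I. a n * t ^ n)"
    by (rule sum.cong) (auto simp: D_def a_def)
  finally show ?thesis .
qed

lemma summable_iff: assumes t: "t \<ge> 0"
  shows "(\<lambda>w. t ^ d w) summable_on carrier G \<longleftrightarrow> summable (\<lambda>n. a n * t ^ n)"
proof
  assume sm: "(\<lambda>w. t ^ d w) summable_on carrier G"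
  show "summable (\<lambda>n. a n * t ^ n)"
  proof (rule summableI_nonneg_bounded)
    show "0 \<le> a n * t ^ n" for n using t a_nonneg by simp
    fix N
    have "(\<Sum>n<N. a n * t ^ n) = sum (\<lambda>w. t ^ d w) (\<Union>n\<in>{..<N}. D n)"
      by (simp add: sum_union_D)
    also have "\<dots> \<le> infsum (\<lambda>w. t ^ d w) (carrier G)"
      by (rule finite_sum_le_infsum) (use sm t D_finite in \<open>auto simp: D_def\<close>)
    finally show "(\<Sum>n<N. a n * t ^ n) \<le> infsum (\<lambda>w. t ^ d w) (carrier G)" .
  qed
next
  assume sm: "summable (\<lambda>n. a n * t ^ n)"
  show "(\<lambda>w. t ^ d w) summable_on carrier G"
  proof (rule nonneg_bdd_above_summable_on)
    show "0 \<le> t ^ d x" for x using t by simp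
    show "bdd_above (sum (\<lambda>w. t ^ d w) ` {F. F \<subseteq> carrier G \<and> finite F})"
    proof (rule bdd_aboveI2)
      fix F assume F: "F \<in> {F. F \<subseteq> carrier G \<and> finite F}"
      have "sum (\<lambda>w. t ^ d w) F \<le> sum (\<lambda>w. t ^ d w) (\<Union>n\<in>d ` F. D n)"
        by (rule sum_mono2) (use F t D_finite in \<open>auto simp: D_def\<close>)
      also have "\<dots> = (\<Sum>n\<in>d ` F. a n * t ^ n)" by (rule sum_union_D) (use F in auto)
      also have "\<dots> \<le> suminf (\<lambda>n. a n * t ^ n)"
        by (rule sum_le_suminf) (use sm F t a_nonneg in auto)
      finally show "sum (\<lambda>w. t ^ d w) F \<le> suminf (\<lambda>n. a n * t ^ n)" .
    qed
  qed
qed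

lemma a_pow: "a (k * N + r) \<le> a N ^ k * a r"
proof (induction k)
  case 0 then show ?case by simp
next
  case (Suc k)
  have "a (Suc k * N + r) = a (N + (k * N + r))" by (simp add: algebra_simps)
  also have "\<dots> \<le> a N * a (k * N + r)" by (rule a_submult)
  also have "\<dots> \<le> a N * (a N ^ k * a r)" using Suc a_nonneg by (simp add: mult_left_mono)
  finally show ?case by (simp add: algebra_simps)
qed

lemma fekete: assumes t: "t > 0" and sm: "summable (\<lambda>n. a n * t ^ n)"
  shows "ereal t < conv_radius a"
proof -
  have "(\<lambda>n. a n * t ^ n) \<longlonglongrightarrow> 0" by (rule summable_LIMSEQ_zero[OF sm])
  then have "eventually (\<lambda>n. a n * t ^ n < 1/2) sequentially"
    by (rule order_tendstoD) simp
  then obtain M where M: "\<And>n. n \<ge> M \<Longrightarrow> a n * t ^ n < 1/2" by (auto simp: eventually_sequentially)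
  define N where "N = Suc M"
  have N0: "N > 0" and aN: "a N * t ^ N < 1/2" using M[of "Suc M"] by (auto simp: N_def)
  define l where "l = root N (3/2)"
  have l1: "l > 1" unfolding l_def using N0 real_root_less_iff[OF N0, of 1 "3/2"] by simp
  have lN: "l ^ N = 3/2" unfolding l_def using N0 by simp
  define x where "x = t * l"
  have x: "x > t" "x > 0" using l1 t by (auto simp: x_def)
  have q: "a N * x ^ N \<le> 3/4"
  proof -
    have "a N * x ^ N = (a N * t ^ N) * (3/2)" by (simp add: x_def power_mult_distrib lN)
    also have "\<dots> \<le> (1/2) * (3/2)" using aN by (intro mult_right_mono) auto
    finally show ?thesis by simp
  qed
  define f where "f n = a n * x ^ n" for n
  have f0: "f n \<ge> 0" for n using x a_nonneg by (simp add: f_def)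
  define B where "B = (\<Sum>r<N. f r)"
  have fb: "f (k * N + r) \<le> (3/4) ^ k * f r" for k r
  proof -
    have "f (k * N + r) = a (k * N + r) * (x ^ N) ^ k * x ^ r"
      by (simp add: f_def power_add power_mult mult.commute)
    also have "\<dots> \<le> (a N ^ k * a r) * (x ^ N) ^ k * x ^ r"
      using a_pow x by (intro mult_right_mono) auto
    also have "\<dots> = (a N * x ^ N) ^ k * f r" by (simp add: f_def power_mult_distrib)
    also have "\<dots> \<le> (3/4) ^ k * f r"
      using q f0 a_nonneg x by (intro mult_right_mono power_mono) auto
    finally show ?thesis .
  qed
  have blk: "(\<Sum>i\<in>{k * N..<k * N + N}. f i) \<le> (3/4) ^ k * B" for k
  proof -
    have "(\<Sum>i\<in>{k * N..<k * N + N}. f i) = (\<Sum>r<N. f (k * N + r))"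
      using sum.atLeastLessThan_shift_0[of f "k * N" "k * N + N"] by (simp add: atLeast0LessThan o_def)
    also have "\<dots> \<le> (\<Sum>r<N. (3/4) ^ k * f r)" by (rule sum_mono) (rule fb)
    finally show ?thesis by (simp add: B_def sum_distrib_left)
  qed
  have "summable f"
  proof (rule summableI_nonneg_bounded)
    show "0 \<le> f n" for n by (rule f0)
    fix n
    have "(\<Sum>i<n. f i) \<le> (\<Sum>i<n * N. f i)"
      by (rule sum_mono2) (use N0 f0 in auto)
    also have "\<dots> = (\<Sum>k<n. \<Sum>i\<in>{k * N..<k * N + N}. f i)" by (simp add: sum.nat_group)
    also have "\<dots> \<le> (\<Sum>k<n. (3/4) ^ k * B)" by (rule sum_mono) (rule blk)
    also have "\<dots> = (\<Sum>k<n. (3/4::real) ^ k) * B" by (simp add: sum_distrib_right)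
    also have "\<dots> \<le> suminf (\<lambda>k. (3/4::real) ^ k) * B"
      by (intro mult_right_mono sum_le_suminf summable_geometric) (auto simp: B_def f0 sum_nonneg)
    finally show "(\<Sum>i<n. f i) \<le> suminf (\<lambda>k. (3/4::real) ^ k) * B" .
  qed
  then have "conv_radius a \<ge> ereal (norm x)" unfolding f_def by (rule conv_radius_geI)
  then have c: "ereal x \<le> conv_radius a" using x by simp
  show ?thesis by (rule order_less_le_trans[OF _ c]) (use x in simp)
qed

lemma radius_iff: assumes "t > 0"
  shows "summable (\<lambda>n. a n * t ^ n) \<longleftrightarrow> ereal t < conv_radius a"
proof
  assume "ereal t < conv_radius a"
  then show "summable (\<lambda>n. a n * t ^ n)" using assms summable_in_conv_radius[of t a] by simp
qed (rule fekete[OF assms])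


abbreviation sph where "sph \<equiv> spherical G S"
abbreviation vert where "vert \<equiv> davis_vertices G S"

lemma sph_empty: "{} \<in> sph"
  by (simp add: spherical_def generate_empty)

lemma sph_single: assumes "s \<in> S" shows "{s} \<in> sph"
proof -
  have "generate G {s} \<subseteq> {\<one>, s}"
  proof
    fix x assume "x \<in> generate G {s}"
    then show "x \<in> {\<one>, s}"
    proof (induction rule: generate.induct)
      case (inv h) then show ?case using inv_S assms by auto
    next
      case (eng h1 h2) then show ?case using invol assms Ssub by auto
    qed auto
  qed
  then show ?thesis using assms unfolding spherical_def by (auto intro: finite_subset)
qed

lemma sph_finite: "finite sph"
proof -
  have "sph \<subseteq> Pow S" by (auto simp: spherical_def)
  then show ?thesis using finS by (meson finite_Pow_iff finite_subset)
qed

lemma sph_subgroup: "T \<in> sph \<Longrightarrow> subgroup (generate G T) G"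
  using Ssub by (intro generate_is_subgroup) (auto simp: spherical_def)

lemma coset_empty: "w \<in> carrier G \<Longrightarrow> w <#\<^bsub>G\<^esub> generate G {} = {w}"
  by (simp add: generate_empty l_coset_def)

lemma in_own_coset: "T \<in> sph \<Longrightarrow> w \<in> carrier G \<Longrightarrow> w \<in> w <#\<^bsub>G\<^esub> generate G T"
  using sph_subgroup unfolding l_coset_def
  by (auto intro!: bexI[of _ "\<one>"] simp: subgroup.one_closed)

lemma coset_carrier: "T \<in> sph \<Longrightarrow> w \<in> carrier G \<Longrightarrow> w <#\<^bsub>G\<^esub> generate G T \<subseteq> carrier G"
  using sph_subgroup[of T] unfolding l_coset_def by (auto intro!: m_closed dest: subgroup.mem_carrier)

lemma vert_iff: "\<sigma> \<in> vert \<longleftrightarrow> (\<exists>w T. w \<in> carrier G \<and> T \<in> sph \<and> \<sigma> = (w <#\<^bsub>G\<^esub> generate G T, T))"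
  unfolding davis_vertices_def by blast

lemma edge_vert: "e \<in> davis_edges G S \<Longrightarrow> fst e \<in> vert \<and> snd e \<in> vert"
  unfolding davis_edges_def vert_iff by auto

definition ind :: "complex \<Rightarrow> 'a set \<times> 'a set \<Rightarrow> complex" where
  "ind c = (\<lambda>\<sigma>. if \<sigma> \<in> vert then c else 0)"

lemma harm_const:
  assumes f: "f \<in> harmonic0 G S t"
  shows "f = ind (f ({\<one>}, {}))"
proof -
  define Bv where "Bv w = (w <#\<^bsub>G\<^esub> generate G {}, ({} :: 'a set))" for w
  have ed: "f (snd e) = f (fst e)" if "e \<in> davis_edges G S" for e
    using f that unfolding harmonic0_def coboundary0_def by auto
  have sa: "f (w <#\<^bsub>G\<^esub> generate G T, T) = f (Bv w)" if w: "w \<in> carrier G" and T: "T \<in> sph" for w T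
  proof (cases "T = {}")
    case True then show ?thesis by (simp add: Bv_def)
  next
    case False
    have "(Bv w, (w <#\<^bsub>G\<^esub> generate G T, T)) \<in> davis_edges G S"
      unfolding davis_edges_def Bv_def using w T sph_empty False by blast
    from ed[OF this] show ?thesis by simp
  qed
  have sb: "f (Bv (w \<otimes> s)) = f (Bv w)" if w: "w \<in> carrier G" and s: "s \<in> S" for w s
  proof -
    have ws: "w \<otimes> s \<in> carrier G" using w s Ssub by auto
    have "w \<otimes> s \<in> w <#\<^bsub>G\<^esub> generate G {s}" unfolding l_coset_def by (auto intro: generate.incl)
    then have "w <#\<^bsub>G\<^esub> generate G {s} = (w \<otimes> s) <#\<^bsub>G\<^esub> generate G {s}"
      by (rule l_repr_independence) (use w sph_subgroup sph_single s in auto)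
    then show ?thesis using sa[OF w sph_single[OF s]] sa[OF ws sph_single[OF s]] by simp
  qed
  have sc: "f (Bv (x \<otimes> word_eval G ws)) = f (Bv x)" if "set ws \<subseteq> S" "x \<in> carrier G" for ws x
    using that
  proof (induction ws arbitrary: x)
    case Nil then show ?case by simp
  next
    case (Cons s ws)
    have c: "s \<in> carrier G" "word_eval G ws \<in> carrier G" "x \<otimes> s \<in> carrier G"
      using Cons.prems Ssub we_carrier[of ws] by auto
    have "x \<otimes> word_eval G (s # ws) = (x \<otimes> s) \<otimes> word_eval G ws"
      using c Cons.prems by (simp add: m_assoc)
    then show ?case using Cons.IH[of "x \<otimes> s"] c Cons.prems sb by auto
  qed
  have sd: "f (Bv w) = f ({\<one>}, {})" if w: "w \<in> carrier G" for w
  proof -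
    obtain ws where "set ws \<subseteq> S" "word_eval G ws = w" using exists_word w by blast
    then have "f (Bv w) = f (Bv \<one>)" using sc[of ws \<one>] w by simp
    then show ?thesis by (simp add: Bv_def coset_empty)
  qed
  show ?thesis
  proof
    fix \<sigma> show "f \<sigma> = ind (f ({\<one>}, {})) \<sigma>"
    proof (cases "\<sigma> \<in> vert")
      case True
      then obtain w T where "w \<in> carrier G" "T \<in> sph" "\<sigma> = (w <#\<^bsub>G\<^esub> generate G T, T)" using vert_iff by blast
      then show ?thesis using sa sd True by (simp add: ind_def)
    next
      case False then show ?thesis using f unfolding ind_def harmonic0_def wl2_def by (cases \<sigma>) auto
    qed
  qed
qed

lemma vl_Bv: "w \<in> carrier G \<Longrightarrow> vertex_len G S ({w}, T) = d w"
  unfolding vertex_len_def by (rule Least_equality) auto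

lemma vl_ex: assumes "\<sigma> \<in> vert" shows "\<exists>u. u \<in> fst \<sigma> \<and> d u = vertex_len G S \<sigma>"
proof -
  obtain w T where w: "w \<in> carrier G" "T \<in> sph" "\<sigma> = (w <#\<^bsub>G\<^esub> generate G T, T)" using vert_iff assms by blast
  then have "\<exists>n. \<exists>u\<in>fst \<sigma>. d u = n" using in_own_coset by auto
  from LeastI_ex[OF this] have "\<exists>u\<in>fst \<sigma>. d u = vertex_len G S \<sigma>" unfolding vertex_len_def .
  then show ?thesis by blast
qed

lemma prod_summable:
  fixes h :: "'x \<times> 'y \<Rightarrow> 'c::{topological_comm_monoid_add}"
  assumes "finite A" "\<And>x. x \<in> A \<Longrightarrow> (\<lambda>y. h (x, y)) summable_on B"
  shows "h summable_on (A \<times> B)"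
proof -
  have eq: "A \<times> B = (\<Union>x\<in>A. Pair x ` B)" by auto
  have "h summable_on Pair x ` B" if "x \<in> A" for x
    using assms(2)[OF that] by (subst summable_on_reindex) (auto simp: inj_on_def o_def)
  then show ?thesis unfolding eq
    by (intro summable_on_finite_union_disjoint assms(1)) auto
qed

lemma vert_summable_iff: assumes t: "(t::real) > 0"
  shows "(\<lambda>\<sigma>. t ^ vertex_len G S \<sigma>) summable_on vert \<longleftrightarrow> (\<lambda>w. t ^ d w) summable_on carrier G"
proof
  assume sm: "(\<lambda>\<sigma>. t ^ vertex_len G S \<sigma>) summable_on vert"
  define Bv where "Bv w = (w <#\<^bsub>G\<^esub> generate G {}, ({} :: 'a set))" for w
  have sub: "Bv ` carrier G \<subseteq> vert"
  proof
    fix x assume "x \<in> Bv ` carrier G"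
    then obtain w where "w \<in> carrier G" "x = Bv w" by blast
    then show "x \<in> vert" unfolding vert_iff Bv_def using sph_empty by blast
  qed
  have inj: "inj_on Bv (carrier G)" unfolding Bv_def inj_on_def by (auto simp: coset_empty)
  have "(\<lambda>\<sigma>. t ^ vertex_len G S \<sigma>) summable_on Bv ` carrier G"
    by (rule summable_on_subset_banach[OF sm sub])
  then have "((\<lambda>\<sigma>. t ^ vertex_len G S \<sigma>) \<circ> Bv) summable_on carrier G"
    using summable_on_reindex[OF inj] by blast
  then show "(\<lambda>w. t ^ d w) summable_on carrier G"
    by (rule summable_on_cong[THEN iffD1, rotated]) (simp add: Bv_def coset_empty vl_Bv)
next
  assume sm: "(\<lambda>w. t ^ d w) summable_on carrier G"
  define rep where "rep \<sigma> = (snd \<sigma>, SOME u. u \<in> fst \<sigma> \<and> d u = vertex_len G S \<sigma>)" for \<sigma> :: "'a set \<times> 'a set"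
  have rep: "snd (rep \<sigma>) \<in> fst \<sigma> \<and> d (snd (rep \<sigma>)) = vertex_len G S \<sigma>" if "\<sigma> \<in> vert" for \<sigma>
    unfolding rep_def using vl_ex[OF that] by simp (rule someI_ex)
  have rep2: "rep \<sigma> \<in> sph \<times> carrier G \<and> fst \<sigma> = snd (rep \<sigma>) <#\<^bsub>G\<^esub> generate G (snd \<sigma>)" if s: "\<sigma> \<in> vert" for \<sigma>
  proof -
    obtain w T where w: "w \<in> carrier G" "T \<in> sph" "\<sigma> = (w <#\<^bsub>G\<^esub> generate G T, T)" using vert_iff s by blast
    have u: "snd (rep \<sigma>) \<in> w <#\<^bsub>G\<^esub> generate G T" using rep[OF s] w by simp
    have c: "snd (rep \<sigma>) \<in> carrier G" using u coset_carrier w by blast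
    have e: "w <#\<^bsub>G\<^esub> generate G T = snd (rep \<sigma>) <#\<^bsub>G\<^esub> generate G T"
      by (rule l_repr_independence[OF u w(1) sph_subgroup[OF w(2)]])
    have f: "fst (rep \<sigma>) = snd \<sigma>" by (simp add: rep_def)
    have sT: "snd \<sigma> = T" and fw: "fst \<sigma> = w <#\<^bsub>G\<^esub> generate G T" using w(3) by simp_all
    have "rep \<sigma> \<in> sph \<times> carrier G" unfolding mem_Times_iff using f sT c w(2) by simp
    moreover have "fst \<sigma> = snd (rep \<sigma>) <#\<^bsub>G\<^esub> generate G (snd \<sigma>)" unfolding sT fw by (rule e)
    ultimately show ?thesis by blast
  qed
  have inj: "inj_on rep vert"
  proof (rule inj_onI)
    fix x y assume xy: "x \<in> vert" "y \<in> vert" "rep x = rep y"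
    then have "snd x = snd y" by (simp add: rep_def)
    moreover have "fst x = fst y" using rep2[OF xy(1)] rep2[OF xy(2)] xy(3) \<open>snd x = snd y\<close> by simp
    ultimately show "x = y" by (simp add: prod_eq_iff)
  qed
  have "(\<lambda>p. t ^ d (snd p)) summable_on sph \<times> carrier G"
    by (rule prod_summable[OF sph_finite]) (simp add: sm)
  then have "(\<lambda>p. t ^ d (snd p)) summable_on rep ` vert"
    by (rule summable_on_subset_banach) (use rep2 in blast)
  then have "((\<lambda>p. t ^ d (snd p)) \<circ> rep) summable_on vert"
    using summable_on_reindex[OF inj] by blast
  then show "(\<lambda>\<sigma>. t ^ vertex_len G S \<sigma>) summable_on vert"
    by (rule summable_on_cong[THEN iffD1, rotated]) (simp add: rep)
qed

lemma harm_iff: assumes t: "t > 0"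
  shows "f \<in> harmonic0 G S t \<longleftrightarrow> (\<exists>c. f = ind c \<and> (c = 0 \<or> (\<lambda>w. t ^ d w) summable_on carrier G))"
proof -
  have wl: "ind c \<in> wl2 vert (cochain0_weight G S t) \<longleftrightarrow> (c = 0 \<or> (\<lambda>w. t ^ d w) summable_on carrier G)" for c
  proof -
    have "ind c \<in> wl2 vert (cochain0_weight G S t) \<longleftrightarrow>
       (\<lambda>\<sigma>. (cmod c)\<^sup>2 * t ^ vertex_len G S \<sigma>) summable_on vert"
      unfolding wl2_def cochain0_weight_def ind_def
      by (auto intro: summable_on_cong[THEN iffD1, rotated])
    also have "\<dots> \<longleftrightarrow> (c = 0 \<or> (\<lambda>\<sigma>. t ^ vertex_len G S \<sigma>) summable_on vert)"
      by (cases "c = 0") (auto simp: summable_on_cmult_right')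
    finally show ?thesis using vert_summable_iff[OF t] by simp
  qed
  have cob: "\<forall>e\<in>davis_edges G S. coboundary0 (ind c) e = 0" for c
    using edge_vert by (auto simp: coboundary0_def ind_def)
  show ?thesis
  proof
    assume f: "f \<in> harmonic0 G S t"
    then have "f = ind (f ({\<one>}, {}))" by (rule harm_const)
    moreover have "f \<in> wl2 vert (cochain0_weight G S t)" using f by (simp add: harmonic0_def)
    ultimately show "\<exists>c. f = ind c \<and> (c = 0 \<or> (\<lambda>w. t ^ d w) summable_on carrier G)"
      using wl by metis
  next
    assume "\<exists>c. f = ind c \<and> (c = 0 \<or> (\<lambda>w. t ^ d w) summable_on carrier G)"
    then show "f \<in> harmonic0 G S t" using wl cob unfolding harmonic0_def by auto
  qed
qed

lemma has_sum_single_pt: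
  fixes f :: "'x \<Rightarrow> 'c::{comm_monoid_add, topological_space}"
  assumes "i0 \<in> I" "\<And>i. i \<in> I \<Longrightarrow> i \<noteq> i0 \<Longrightarrow> f i = 0"
  shows "(f has_sum f i0) I"
proof -
  have "(f has_sum f i0) {i0}" using has_sum_finite[of "{i0}" f] by simp
  moreover have "(f has_sum f i0) I \<longleftrightarrow> (f has_sum f i0) {i0}"
    by (rule has_sum_cong_neutral) (use assms in auto)
  ultimately show ?thesis by simp
qed

definition gg where "gg t T = sub_growth G S T t powr (-1/2)"
definition vv where "vv t = (\<lambda>(T, w). if T \<in> sph \<and> w \<in> carrier G then complex_of_real (gg t T) else 0)"

abbreviation II where "II \<equiv> target_index G S"

lemma Phi_ind: "Phi0 G S t (ind c) = (\<lambda>i. c * vv t i)"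
proof
  fix i :: "'a set \<times> 'a"
  obtain T w where i: "i = (T, w)" by (cases i)
  show "Phi0 G S t (ind c) i = c * vv t i"
  proof (cases "T \<in> sph \<and> w \<in> carrier G")
    case True
    then have "(w <#\<^bsub>G\<^esub> generate G T, T) \<in> vert" unfolding vert_iff by blast
    then show ?thesis using True by (simp add: i Phi0_def vv_def ind_def gg_def)
  next
    case False then show ?thesis by (auto simp: i Phi0_def vv_def)
  qed
qed

lemma gg_empty: "gg t {} = 1"
  by (simp add: gg_def sub_growth_def generate_empty d_one)

lemma harm_set: assumes "(t::real) > 0"
  shows "harmonic0 G S t = ind ` {c. c = 0 \<or> (\<lambda>w. t ^ d w) summable_on carrier G}"
  using harm_iff[OF assms] by blast

lemma V_L: assumes "(t::real) > 0" "(\<lambda>w. t ^ d w) summable_on carrier G"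
  shows "Phi0 G S t ` harmonic0 G S t = range (\<lambda>c i. c * vv t i)"
  using assms by (simp add: harm_set image_image Phi_ind)

lemma V_nL: assumes "(t::real) > 0" "\<not> (\<lambda>w. t ^ d w) summable_on carrier G"
  shows "Phi0 G S t ` harmonic0 G S t = {\<lambda>i. 0}"
  using assms by (simp add: harm_set Phi_ind)

lemma Wt_ge: assumes "(\<lambda>w. (t::real) ^ d w) summable_on carrier G" "t > 0"
  shows "infsum (\<lambda>w. t ^ d w) (carrier G) \<ge> 1"
proof -
  have "sum (\<lambda>w. t ^ d w) {\<one>} \<le> infsum (\<lambda>w. t ^ d w) (carrier G)"
    by (rule finite_sum_le_infsum) (use assms in auto)
  then show ?thesis by (simp add: d_one)
qed

lemma hv: assumes L: "(\<lambda>w. (t::real) ^ d w) summable_on carrier G"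
  shows "((\<lambda>i. vv t i * cnj (vv t i) * of_real (target_weight G S t i)) has_sum
     complex_of_real ((\<Sum>T\<in>sph. (gg t T)\<^sup>2) * infsum (\<lambda>w. t ^ d w) (carrier G))) II"
proof -
  define h where "h i = (gg t (fst i))\<^sup>2 * t ^ d (snd i)" for i :: "'a set \<times> 'a"
  have hs: "h summable_on sph \<times> carrier G"
    unfolding h_def by (rule prod_summable[OF sph_finite]) (simp add: summable_on_cmult_right L)
  have "infsum h (sph \<times> carrier G) = (\<Sum>T\<in>sph. infsum (\<lambda>w. h (T, w)) (carrier G))"
    using infsum_Sigma_banach[OF hs] sph_finite by simp
  also have "\<dots> = (\<Sum>T\<in>sph. (gg t T)\<^sup>2 * infsum (\<lambda>w. t ^ d w) (carrier G))"
    unfolding h_def by (simp add: infsum_cmult_right L)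
  also have "\<dots> = (\<Sum>T\<in>sph. (gg t T)\<^sup>2) * infsum (\<lambda>w. t ^ d w) (carrier G)"
    by (simp add: sum_distrib_right)
  finally have "(h has_sum ((\<Sum>T\<in>sph. (gg t T)\<^sup>2) * infsum (\<lambda>w. t ^ d w) (carrier G))) (sph \<times> carrier G)"
    using hs by (simp add: has_sum_iff)
  from has_sum_of_real[OF this] show ?thesis
    unfolding target_index_def
    by (rule has_sum_cong[THEN iffD1, rotated])
       (auto simp: vv_def h_def target_weight_def power2_eq_square)
qed

lemma he: assumes "T \<in> sph"
  shows "((\<lambda>i. unit_vec G T i * cnj (vv t i) * of_real (target_weight G S t i)) has_sum
     complex_of_real (gg t T)) II"
proof -
  have "((\<lambda>i. unit_vec G T i * cnj (vv t i) * of_real (target_weight G S t i)) has_sum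
     (unit_vec G T (T, \<one>) * cnj (vv t (T, \<one>)) * of_real (target_weight G S t (T, \<one>)))) II"
  proof (rule has_sum_single_pt)
    show "(T, \<one>) \<in> II" using assms by (simp add: target_index_def)
  next
    fix i assume "i \<noteq> (T, \<one>)"
    then have "unit_vec G T i = 0" by (cases i) (auto simp: unit_vec_def)
    then show "unit_vec G T i * cnj (vv t i) * of_real (target_weight G S t i) = 0" by simp
  qed
  then show ?thesis using assms by (simp add: unit_vec_def vv_def target_weight_def d_one)
qed

lemma he2: assumes "T \<in> sph"
  shows "((\<lambda>i. (b * vv t i) * cnj (unit_vec G T i) * of_real (target_weight G S t i)) has_sum
     (b * complex_of_real (gg t T))) II"
proof -
  have "((\<lambda>i. (b * vv t i) * cnj (unit_vec G T i) * of_real (target_weight G S t i)) has_sum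
     ((b * vv t (T, \<one>)) * cnj (unit_vec G T (T, \<one>)) * of_real (target_weight G S t (T, \<one>)))) II"
  proof (rule has_sum_single_pt)
    show "(T, \<one>) \<in> II" using assms by (simp add: target_index_def)
  next
    fix i assume "i \<noteq> (T, \<one>)"
    then have "unit_vec G T i = 0" by (cases i) (auto simp: unit_vec_def)
    then show "(b * vv t i) * cnj (unit_vec G T i) * of_real (target_weight G S t i) = 0" by simp
  qed
  then show ?thesis using assms by (simp add: unit_vec_def vv_def target_weight_def d_one)
qed

lemma win: assumes L: "(\<lambda>w. (t::real) ^ d w) summable_on carrier G" and T: "T \<in> sph"
  shows "winner II (target_weight G S t) (unit_vec G T - (\<lambda>i. b * vv t i)) (\<lambda>i. c * vv t i)
    = cnj c * (complex_of_real (gg t T) - b * complex_of_real ((\<Sum>T\<in>sph. (gg t T)\<^sup>2) * infsum (\<lambda>w. t ^ d w) (carrier G)))"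
proof -
  define N where "N = complex_of_real ((\<Sum>T\<in>sph. (gg t T)\<^sup>2) * infsum (\<lambda>w. t ^ d w) (carrier G))"
  note h1 = has_sum_cmult_right[OF he[OF T], of "cnj c"]
  note h2 = has_sum_cmult_right[OF hv[OF L], of "- (cnj c * b)"]
  have "((\<lambda>i. cnj c * (unit_vec G T i * cnj (vv t i) * of_real (target_weight G S t i)) +
      - (cnj c * b) * (vv t i * cnj (vv t i) * of_real (target_weight G S t i))) has_sum
     (cnj c * complex_of_real (gg t T) + - (cnj c * b) * N)) II"
    unfolding N_def by (rule has_sum_add[OF h1 h2])
  moreover have "cnj c * complex_of_real (gg t T) + - (cnj c * b) * N = cnj c * (complex_of_real (gg t T) - b * N)"
    by (simp add: algebra_simps)
  ultimately have X: "((\<lambda>i. cnj c * (unit_vec G T i * cnj (vv t i) * of_real (target_weight G S t i)) +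
      - (cnj c * b) * (vv t i * cnj (vv t i) * of_real (target_weight G S t i))) has_sum
     (cnj c * (complex_of_real (gg t T) - b * N))) II" by metis
  from X have "((\<lambda>i. (unit_vec G T - (\<lambda>i. b * vv t i)) i * cnj (c * vv t i) * of_real (target_weight G S t i)) has_sum
     (cnj c * (complex_of_real (gg t T) - b * N))) II"
    by (rule has_sum_cong[THEN iffD1, rotated]) (auto simp: algebra_simps fun_diff_def)
  then show ?thesis unfolding winner_def N_def by (rule infsumI)
qed


lemma proj: assumes t: "(t::real) > 0" and L: "(\<lambda>w. t ^ d w) summable_on carrier G" and T: "T \<in> sph"
  shows "orth_proj II (target_weight G S t) (range (\<lambda>c i. c * vv t i)) (unit_vec G T)
    = (\<lambda>i. complex_of_real (gg t T / ((\<Sum>T\<in>sph. (gg t T)\<^sup>2) * infsum (\<lambda>w. t ^ d w) (carrier G))) * vv t i)"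
proof -
  define N where "N = (\<Sum>T\<in>sph. (gg t T)\<^sup>2) * infsum (\<lambda>w. t ^ d w) (carrier G)"
  have s1: "(\<Sum>T\<in>sph. (gg t T)\<^sup>2) \<ge> (gg t {})\<^sup>2"
    by (rule member_le_sum) (auto simp: sph_empty sph_finite)
  have N0: "N > 0" unfolding N_def
    using s1 gg_empty Wt_ge[OF L t] by (intro mult_pos_pos) auto
  have w: "winner II (target_weight G S t) (unit_vec G T - (\<lambda>i. b * vv t i)) (\<lambda>i. c * vv t i)
    = cnj c * (complex_of_real (gg t T) - b * complex_of_real N)" for b c
    unfolding N_def by (rule win[OF L T])
  show ?thesis unfolding orth_proj_def N_def[symmetric]
  proof (rule the_equality)
    show "(\<lambda>i. complex_of_real (gg t T / N) * vv t i) \<in> range (\<lambda>c i. c * vv t i) \<and>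
      (\<forall>u\<in>range (\<lambda>c i. c * vv t i). winner II (target_weight G S t)
         (unit_vec G T - (\<lambda>i. complex_of_real (gg t T / N) * vv t i)) u = 0)"
    proof
      show "(\<lambda>i. complex_of_real (gg t T / N) * vv t i) \<in> range (\<lambda>c i. c * vv t i)" by blast
      show "\<forall>u\<in>range (\<lambda>c i. c * vv t i). winner II (target_weight G S t)
         (unit_vec G T - (\<lambda>i. complex_of_real (gg t T / N) * vv t i)) u = 0"
      proof
        fix u assume "u \<in> range (\<lambda>c i. c * vv t i)"
        then obtain c where u: "u = (\<lambda>i. c * vv t i)" by blast
        have "complex_of_real (gg t T) - complex_of_real (gg t T / N) * complex_of_real N = 0"
        proof -
          have "gg t T / N * N = gg t T" using N0 by simp
          then have "complex_of_real (gg t T / N) * complex_of_real N = complex_of_real (gg t T)"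
            by (metis of_real_mult)
          then show ?thesis by simp
        qed
        then show "winner II (target_weight G S t)
         (unit_vec G T - (\<lambda>i. complex_of_real (gg t T / N) * vv t i)) u = 0"
          unfolding u w by simp
      qed
    qed
  next
    fix p assume p: "p \<in> range (\<lambda>c i. c * vv t i) \<and>
      (\<forall>u\<in>range (\<lambda>c i. c * vv t i). winner II (target_weight G S t) (unit_vec G T - p) u = 0)"
    then obtain b where b: "p = (\<lambda>i. b * vv t i)" by blast
    have "winner II (target_weight G S t) (unit_vec G T - p) (\<lambda>i. 1 * vv t i) = 0"
      using p by blast
    then have "complex_of_real (gg t T) - b * complex_of_real N = 0" unfolding b w by simp
    then have "b = complex_of_real (gg t T / N)" using N0 by (simp add: field_simps)
    then show "p = (\<lambda>i. complex_of_real (gg t T / N) * vv t i)" using b by simp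
  qed
qed

lemma betti_L: assumes t: "(t::real) > 0" and L: "(\<lambda>w. t ^ d w) summable_on carrier G"
  shows "betti0 G S t = complex_of_real (1 / infsum (\<lambda>w. t ^ d w) (carrier G))"
proof -
  define N where "N = (\<Sum>T\<in>sph. (gg t T)\<^sup>2) * infsum (\<lambda>w. t ^ d w) (carrier G)"
  have s1: "(\<Sum>T\<in>sph. (gg t T)\<^sup>2) \<ge> (gg t {})\<^sup>2"
    by (rule member_le_sum) (auto simp: sph_empty sph_finite)
  have sp: "(\<Sum>T\<in>sph. (gg t T)\<^sup>2) > 0" using s1 gg_empty by simp
  have Wp: "infsum (\<lambda>w. t ^ d w) (carrier G) > 0" using Wt_ge[OF L t] by simp
  have "betti0 G S t = (\<Sum>T\<in>sph. complex_of_real (gg t T / N) * complex_of_real (gg t T))"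
    unfolding betti0_def V_L[OF t L]
  proof (rule sum.cong[OF HOL.refl])
    fix T assume T: "T \<in> sph"
    show "winner II (target_weight G S t)
        (orth_proj II (target_weight G S t) (range (\<lambda>c i. c * vv t i)) (unit_vec G T))
        (unit_vec G T) = complex_of_real (gg t T / N) * complex_of_real (gg t T)"
      unfolding proj[OF t L T] N_def[symmetric] winner_def by (rule infsumI[OF he2[OF T]])
  qed
  also have "\<dots> = complex_of_real ((\<Sum>T\<in>sph. (gg t T)\<^sup>2) / N)"
    by (simp add: sum_divide_distrib power2_eq_square)
  also have "\<dots> = complex_of_real (1 / infsum (\<lambda>w. t ^ d w) (carrier G))"
    using sp Wp by (simp add: N_def)
  finally show ?thesis .
qed

lemma betti_nL: assumes t: "(t::real) > 0" and L: "\<not> (\<lambda>w. t ^ d w) summable_on carrier G"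
  shows "betti0 G S t = 0"
proof -
  have "orth_proj II (target_weight G S t) {\<lambda>i. 0} (unit_vec G T) = (\<lambda>i. 0)" for T
    unfolding orth_proj_def by (rule the_equality) (auto simp: winner_def)
  then show ?thesis unfolding betti0_def V_nL[OF t L] by (simp add: winner_def)
qed

lemma radius_eq: "growth_radius G S = conv_radius a"
  by (simp add: growth_radius_def a_def D_def)

end

theorem theorem7p1:
  fixes G :: "('a, 'b) monoid_scheme" and S :: "'a set" and t :: real
  assumes "coxeter_system G S" and "0 < t"
  shows "(ereal t < growth_radius G S \<longrightarrow>
            betti0 G S t = complex_of_real (1 / growth_series G S t)) \<and>
         (growth_radius G S \<le> ereal t \<longrightarrow> betti0 G S t = 0)"
proof -
  have C: "group G" "finite S" "S \<subseteq> carrier G" "\<forall>s\<in>S. s \<otimes>\<^bsub>G\<^esub> s = \<one>\<^bsub>G\<^esub>" "generate G S = carrier G"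
    using assms(1) unfolding coxeter_system_def by auto
  interpret coxctx G S
  proof (rule coxctx.intro)
    show "group G" by (rule C(1))
    show "coxctx_axioms G S" unfolding coxctx_axioms_def using C by auto
  qed
  have L: "(\<lambda>w. t ^ word_len G S w) summable_on carrier G \<longleftrightarrow> ereal t < growth_radius G S"
    using summable_iff[of t] radius_iff[OF assms(2)] radius_eq assms(2) by simp
  show ?thesis
    using betti_L[OF assms(2)] betti_nL[OF assms(2)] L
    by (auto simp: growth_series_def not_less[symmetric])
qed

end
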